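(* Let $D$ be a CAEXT derivation ending in a configuration $C\neq\mathsf{unsat}$. Then in $C$, for all array terms $a,b$ and index terms $i$: if $\pi(a,b[i])\neq()$, then the formula $\mathcal R(a,b[i])\Rightarrow a[i]\approx b[i]$ is valid in the theory of extensional constant arrays.
   Context: Theory. Many-sorted first-order logic with equality. There is an index sort $\sigma$, an element sort $\tau$, and an array sort $(\sigma\to\tau)$, with function symbols: read $a[i]$, write $a\langle i\triangleleft u\rangle$, and constant array $\langle v\rangle$. The theory of extensional constant arrays consists of all interpretations satisfying: (row-eq) $\forall a,i,j,u.\ i\approx j\Rightarrow a\langle i\triangleleft u\rangle[j]\approx u$; (row-ne) $\forall a,i,j,u.\ i\not\approx j\Rightarrow a\langle i\triangleleft u\rangle[j]\approx a[j]$; (ext) $\forall a,b.\ a\approx b\Leftrightarrow \forall i.\ a[i]\approx b[i]$; (roc) $\forall i,v.\ \langle v\rangle[i]\approx v$. The empty theory treats all these symbols (and the array sort) as uninterpreted. $T(A)$ is the set of terms occurring in $A$, $T_{\mathcal A}(A)$ the set of array terms in $A$, and $W(A)=\{a\langle i\triangleleft u\rangle[i]\approx u \mid a\langle i\triangleleft u\rangle\in T(A)\}$. Configurations. A configuration is either $\mathsf{unsat}$ or a triple $\langle A,\mathcal I,\pi\rangle$ where $A$ is a set of formulas (with flat literals), $\mathcal I$ is either $\mathcal I_0=\mathsf{none}$ or an interpretation in the empty theory satisfying $A$, and $\pi$ maps pairs $(a,t)$ ($a$ an array term, $t$ a read term $b[i]$ or a constant array term $\langle v\rangle$) to either the undefined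 value $()$ or a pair $(r,c)$ with $r$ a formula and $c$ an array term. $\pi_0$ maps every pair to $()$; the initial configuration for $A$ is $\langle A,\mathcal I_0,\pi_0\rangle$. Reasons. $\mathcal R(a,t)=()$ if $\pi(a,t)=()$; otherwise $\mathcal R(a,t)=\top$ if $t=a$ or $t=a[i]$ for some $i$; otherwise $\mathcal R(a,t)=\mathcal R(c,t)\wedge r$ where $\pi(a,t)=(r,c)$. Updated indices $I(a,\langle v\rangle)$: $()$ if $\pi(a,\langle v\rangle)=()$; $\emptyset$ if $a=\langle v\rangle$; $I(b,\langle v\rangle)\cup\{j\}$ if $\pi(a,\langle v\rangle)=(\top,b)$ with $b=a\langle j\triangleleft u\rangle$ or $a=b\langle j\triangleleft u\rangle$; otherwise $I(c,\langle v\rangle)$ where $\pi(a,\langle v\rangle)=(r,c)$. "$\mathcal I\models\varphi$" refers to the current $\mathcal I$ (empty theory); such premises require $\mathcal I\ne\mathcal I_0$. "Reset" means $(\mathcal I,\pi):=(\mathcal I_0,\pi_0)$. Rules of CAEXT: Interp: if $\mathcal I=\mathcal I_0$ and $\mathcal I'\models A\cup W(A)$ in the empty theory, set $\mathcal I:=\mathcal I'$. Conf: if $A\cup W(A)$ is empty-theory unsatisfiable, derive $\mathsf{unsat}$. InitR: $a[i]\in T(A)$ ⟹ $\pi(a,a[i]):=(\top,a)$. InitW: $s=a\langle i\triangleleft u\rangle\in T(A)$ ⟹ $\pi(s,s[i]):=(\top,s)$. RowD: $\mathcal I\models i\not\approx j$, $\pi(a\langle j\triangleleft u\rangle,b[i])\ne()$,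 $\pi(a,b[i])=()$ ⟹ $\pi(a,b[i]):=(i\not\approx j,a\langle j\triangleleft u\rangle)$. RowU: $\mathcal I\models i\not\approx j$, $a\langle j\triangleleft u\rangle\in T(A)$, $\pi(a,b[i])\ne()$, $\pi(a\langle j\triangleleft u\rangle,b[i])=()$ ⟹ $\pi(a\langle j\triangleleft u\rangle,b[i]):=(i\not\approx j,a)$. EqR: $\mathcal I\models a\approx c$, $a,c\in T_{\mathcal A}(A)$, $a\approx c\in T(A)$, $\pi(a,b[i])\ne()$, $\pi(c,b[i])=()$ ⟹ $\pi(c,b[i]):=(a\approx c,a)$. EqL: symmetric, $\pi(a,b[i]):=(a\approx c,c)$. CongR: $\mathcal I\models i\approx k$, $\pi(a,b[i])\ne()$, $\pi(a,c[k])\ne()$, $\mathcal I\models b[i]\not\approx c[k]$ ⟹ add $\mathcal R(a,b[i])\wedge\mathcal R(a,c[k])\wedge i\approx k\Rightarrow b[i]\approx c[k]$ to $A$, reset. DisEq: $\mathcal I\models a\not\approx c$, $a,c\in T_{\mathcal A}(A)$, $a\approx c\in T(A)$, $k_{\{a,c\}}\notin T(A)$ ⟹ add $a\not\approx c\Rightarrow a[k_{\{a,c\}}]\not\approx c[k_{\{a,c\}}]$ (fresh index constant $k_{\{a,c\}}$), reset. Roc: $\pi(\langle v\rangle,b[i])\ne()$, $\mathcal I\models b[i]\not\approx v$ ⟹ add $\mathcal R(\langle v\rangle,b[i])\Rightarrow b[i]\approx v$, reset. InitC: $\langle v\rangle\in T(A)$ ⟹ $\pi(\langle v\rangle,\langle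 v\rangle):=(\top,\langle v\rangle)$. CowD: $\pi(a\langle j\triangleleft u\rangle,\langle v\rangle)\ne()$, $\pi(a,\langle v\rangle)=()$, $\mathcal I\models\exists i{:}\sigma.\bigwedge_{k\in I(a\langle j\triangleleft u\rangle,\langle v\rangle)\cup\{j\}}i\not\approx k$ ⟹ $\pi(a,\langle v\rangle):=(\top,a\langle j\triangleleft u\rangle)$. CowU: $\pi(a,\langle v\rangle)\ne()$, $\pi(a\langle j\triangleleft u\rangle,\langle v\rangle)=()$, $a\langle j\triangleleft u\rangle\in T(A)$, $\mathcal I\models\exists i{:}\sigma.\bigwedge_{k\in I(a,\langle v\rangle)\cup\{j\}}i\not\approx k$ ⟹ $\pi(a\langle j\triangleleft u\rangle,\langle v\rangle):=(\top,a)$. CEqR: $\mathcal I\models a\approx c$, $a,c\in T_{\mathcal A}(A)$, $a\approx c\in T(A)$, $\pi(a,\langle v\rangle)\ne()$, $\pi(c,\langle v\rangle)=()$ ⟹ $\pi(c,\langle v\rangle):=(a\approx c,a)$. CEqL: symmetric, $\pi(a,\langle v\rangle):=(a\approx c,c)$. CongC: $\pi(a,\langle v\rangle)\ne()$, $\pi(a,\langle w\rangle)\ne()$, $\mathcal I\models v\not\approx w$, $\mathcal I\models\exists i{:}\sigma.\bigwedge_{k\in I(a,\langle v\rangle)\cup I(a,\langle w\rangle)}i\not\approx k$ ⟹ add $\mathcal R(a,\langle v\rangle)\wedge\mathcal R(a,\langle w\rangle)\wedge\exists i{:}\sigma.\bigwedge_{k\in I(a,\langle v\rangle)\cup I(a,\langle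 w\rangle)}i\not\approx k\Rightarrow v\approx w$, reset. Conflict rules: CongR, DisEq, Roc, CongC. A derivation is a sequence of configurations starting from an initial configuration, each obtained from the previous by a rule application. *)

theory Defs
  imports Main "HOL-Library.FSet"
begin

datatype srt = Idx | Elem | Arr

text \<open>Cst: uninterpreted constant symbol of a given sort; Var: (bound) variable of a
  given sort; Rd a i = a[i]; Wr a i u = a<i <| u>; CA v = constant array <v>;
  K X = the fresh index constant k_X attached to the unordered pair X = {a,c} (used by DisEq).\<close>
datatype trm = Cst string srt | Var string srt | Rd trm trm | Wr trm trm trm | CA trm
  | K "trm fset"

datatype fm = Tru | Fls | Eq trm trm | Neg fm | Conj fm fm | Disj fm fm | Imp fm fm
  | Exi string srt fm | All string srt fm

fun sort_of :: "trm \<Rightarrow> srt option" where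
  "sort_of (Cst n s) = Some s"
| "sort_of (Var x s) = Some s"
| "sort_of (Rd a i) = (if sort_of a = Some Arr \<and> sort_of i = Some Idx then Some Elem else None)"
| "sort_of (Wr a i u) = (if sort_of a = Some Arr \<and> sort_of i = Some Idx \<and> sort_of u = Some Elem
                         then Some Arr else None)"
| "sort_of (CA v) = (if sort_of v = Some Elem then Some Arr else None)"
| "sort_of (K X) = Some Idx"

fun wf_fm :: "fm \<Rightarrow> bool" where
  "wf_fm (Eq s t) = (sort_of s \<noteq> None \<and> sort_of s = sort_of t)"
| "wf_fm (Neg p) = wf_fm p"
| "wf_fm (Conj p q) = (wf_fm p \<and> wf_fm q)"
| "wf_fm (Disj p q) = (wf_fm p \<and> wf_fm q)"
| "wf_fm (Imp p q) = (wf_fm p \<and> wf_fm q)"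
| "wf_fm (Exi x s p) = wf_fm p"
| "wf_fm (All x s p) = wf_fm p"
| "wf_fm _ = True"

fun subterms :: "trm \<Rightarrow> trm set" where
  "subterms (Rd a i) = insert (Rd a i) (subterms a \<union> subterms i)"
| "subterms (Wr a i u) = insert (Wr a i u) (subterms a \<union> subterms i \<union> subterms u)"
| "subterms (CA v) = insert (CA v) (subterms v)"
| "subterms t = {t}"

fun ground :: "trm \<Rightarrow> bool" where
  "ground (Var x s) = False"
| "ground (Rd a i) = (ground a \<and> ground i)"
| "ground (Wr a i u) = (ground a \<and> ground i \<and> ground u)"
| "ground (CA v) = ground v"
| "ground _ = True"

fun atoms_fm :: "fm \<Rightarrow> (trm \<times> trm) set" where
  "atoms_fm (Eq s t) = {(s, t)}"
| "atoms_fm (Neg p) = atoms_fm p"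
| "atoms_fm (Conj p q) = atoms_fm p \<union> atoms_fm q"
| "atoms_fm (Disj p q) = atoms_fm p \<union> atoms_fm q"
| "atoms_fm (Imp p q) = atoms_fm p \<union> atoms_fm q"
| "atoms_fm (Exi x s p) = atoms_fm p"
| "atoms_fm (All x s p) = atoms_fm p"
| "atoms_fm _ = {}"

fun qfree :: "fm \<Rightarrow> bool" where
  "qfree (Exi x s p) = False"
| "qfree (All x s p) = False"
| "qfree (Neg p) = qfree p"
| "qfree (Conj p q) = (qfree p \<and> qfree q)"
| "qfree (Disj p q) = (qfree p \<and> qfree q)"
| "qfree (Imp p q) = (qfree p \<and> qfree q)"
| "qfree _ = True"

definition atoms :: "fm set \<Rightarrow> (trm \<times> trm) set" where
  "atoms A = (\<Union>p\<in>A. atoms_fm p)"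

definition T :: "fm set \<Rightarrow> trm set" where
  "T A = {t. ground t \<and> (\<exists>(s1, s2)\<in>atoms A. t \<in> subterms s1 \<union> subterms s2)}"

definition TA :: "fm set \<Rightarrow> trm set" where
  "TA A = {t \<in> T A. sort_of t = Some Arr}"

definition W :: "fm set \<Rightarrow> fm set" where
  "W A = {Eq (Rd (Wr a i u) i) u | a i u. Wr a i u \<in> T A}"

definition is_const :: "trm \<Rightarrow> bool" where
  "is_const t \<longleftrightarrow> (\<exists>n s. t = Cst n s) \<or> (\<exists>X. t = K X)"

definition flat_term :: "trm \<Rightarrow> bool" where
  "flat_term t \<longleftrightarrow> is_const t
     \<or> (\<exists>a i. t = Rd a i \<and> is_const a \<and> is_const i)
     \<or> (\<exists>a i u. t = Wr a i u \<and> is_const a \<and> is_const i \<and> is_const u)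
     \<or> (\<exists>v. t = CA v \<and> is_const v)"

definition input_ok :: "fm set \<Rightarrow> bool" where
  "input_ok A \<longleftrightarrow> (\<forall>p\<in>A. wf_fm p \<and> qfree p) \<and>
     (\<forall>(s, t)\<in>atoms A. ground s \<and> ground t \<and> flat_term s \<and> flat_term t)"

fun conjs :: "fm list \<Rightarrow> fm" where
  "conjs [] = Tru"
| "conjs [p] = p"
| "conjs (p # ps) = Conj p (conjs ps)"

definition exdist :: "trm list \<Rightarrow> fm" where
  "exdist ks = Exi ''i'' Idx (conjs (map (\<lambda>k. Neg (Eq (Var ''i'' Idx) k)) ks))"

text \<open>Interpretations in the empty theory (all symbols, and the array sort, uninterpreted):
  a nonempty carrier per sort (as a subset of the value type 'v) and interpretations of
  all function symbols.\<close>
record 'v interp =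
  idom :: "srt \<Rightarrow> 'v set"
  isym :: "string \<Rightarrow> srt \<Rightarrow> 'v"
  ird :: "'v \<Rightarrow> 'v \<Rightarrow> 'v"
  iwr :: "'v \<Rightarrow> 'v \<Rightarrow> 'v \<Rightarrow> 'v"
  ica :: "'v \<Rightarrow> 'v"
  ik :: "trm fset \<Rightarrow> 'v"

definition wf_interp :: "'v interp \<Rightarrow> bool" where
  "wf_interp I \<longleftrightarrow> (\<forall>s. idom I s \<noteq> {}) \<and> (\<forall>n s. isym I n s \<in> idom I s)
     \<and> (\<forall>X. ik I X \<in> idom I Idx)
     \<and> (\<forall>a\<in>idom I Arr. \<forall>i\<in>idom I Idx. ird I a i \<in> idom I Elem)
     \<and> (\<forall>a\<in>idom I Arr. \<forall>i\<in>idom I Idx. \<forall>u\<in>idom I Elem. iwr I a i u \<in> idom I Arr)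
     \<and> (\<forall>v\<in>idom I Elem. ica I v \<in> idom I Arr)"

definition wf_assign :: "'v interp \<Rightarrow> (string \<Rightarrow> srt \<Rightarrow> 'v) \<Rightarrow> bool" where
  "wf_assign I \<rho> \<longleftrightarrow> (\<forall>x s. \<rho> x s \<in> idom I s)"

fun eval :: "'v interp \<Rightarrow> (string \<Rightarrow> srt \<Rightarrow> 'v) \<Rightarrow> trm \<Rightarrow> 'v" where
  "eval I \<rho> (Cst n s) = isym I n s"
| "eval I \<rho> (Var x s) = \<rho> x s"
| "eval I \<rho> (Rd a i) = ird I (eval I \<rho> a) (eval I \<rho> i)"
| "eval I \<rho> (Wr a i u) = iwr I (eval I \<rho> a) (eval I \<rho> i) (eval I \<rho> u)"
| "eval I \<rho> (CA v) = ica I (eval I \<rho> v)"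
| "eval I \<rho> (K X) = ik I X"

fun sat :: "'v interp \<Rightarrow> (string \<Rightarrow> srt \<Rightarrow> 'v) \<Rightarrow> fm \<Rightarrow> bool" where
  "sat I \<rho> Tru = True"
| "sat I \<rho> Fls = False"
| "sat I \<rho> (Eq s t) = (eval I \<rho> s = eval I \<rho> t)"
| "sat I \<rho> (Neg p) = (\<not> sat I \<rho> p)"
| "sat I \<rho> (Conj p q) = (sat I \<rho> p \<and> sat I \<rho> q)"
| "sat I \<rho> (Disj p q) = (sat I \<rho> p \<or> sat I \<rho> q)"
| "sat I \<rho> (Imp p q) = (sat I \<rho> p \<longrightarrow> sat I \<rho> q)"
| "sat I \<rho> (Exi x s p) = (\<exists>d\<in>idom I s. sat I (\<rho>(x := (\<rho> x)(s := d))) p)"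
| "sat I \<rho> (All x s p) = (\<forall>d\<in>idom I s. sat I (\<rho>(x := (\<rho> x)(s := d))) p)"

definition models :: "'v interp \<Rightarrow> fm \<Rightarrow> bool" where
  "models I p \<longleftrightarrow> (\<forall>\<rho>. wf_assign I \<rho> \<longrightarrow> sat I \<rho> p)"

definition arr_model :: "'v interp \<Rightarrow> bool" where
  "arr_model I \<longleftrightarrow> wf_interp I
   \<and> (\<forall>a\<in>idom I Arr. \<forall>i\<in>idom I Idx. \<forall>j\<in>idom I Idx. \<forall>u\<in>idom I Elem.
        i = j \<longrightarrow> ird I (iwr I a i u) j = u)
   \<and> (\<forall>a\<in>idom I Arr. \<forall>i\<in>idom I Idx. \<forall>j\<in>idom I Idx. \<forall>u\<in>idom I Elem.
        i \<noteq> j \<longrightarrow> ird I (iwr I a i u) j = ird I a j)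
   \<and> (\<forall>a\<in>idom I Arr. \<forall>b\<in>idom I Arr. a = b \<longleftrightarrow> (\<forall>i\<in>idom I Idx. ird I a i = ird I b i))
   \<and> (\<forall>i\<in>idom I Idx. \<forall>v\<in>idom I Elem. ird I (ica I v) i = v)"

text \<open>Validity in the theory of extensional constant arrays, over models whose carriers
  live in the type 'w (the main theorem is stated for an arbitrary type 'w).\<close>
definition tvalid :: "'w itself \<Rightarrow> fm \<Rightarrow> bool" where
  "tvalid _ p \<longleftrightarrow> (\<forall>(I::'w interp) \<rho>. arr_model I \<and> wf_assign I \<rho> \<longrightarrow> sat I \<rho> p)"

type_synonym pimap = "trm \<times> trm \<Rightarrow> (fm \<times> trm) option"

text \<open>Cfg A I pi; I = None is I_0 (none); pi(a,t) = None is the undefined value ().\<close>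
datatype 'v config = Unsat | Cfg "fm set" "'v interp option" pimap

definition pi0 :: pimap where "pi0 = (\<lambda>_. None)"

definition init :: "fm set \<Rightarrow> 'v config" where "init A = Cfg A None pi0"

text \<open>Reasons R(a,t) (as a relation; R(a,t) = r iff reason pi a t r).\<close>
inductive reason :: "pimap \<Rightarrow> trm \<Rightarrow> trm \<Rightarrow> fm \<Rightarrow> bool" for \<pi> where
  base: "\<pi> (a, t) \<noteq> None \<Longrightarrow> (t = a \<or> (\<exists>i. t = Rd a i)) \<Longrightarrow> reason \<pi> a t Tru"
| step: "\<pi> (a, t) = Some (r, c) \<Longrightarrow> \<not> (t = a \<or> (\<exists>i. t = Rd a i)) \<Longrightarrow> reason \<pi> c t r'
         \<Longrightarrow> reason \<pi> a t (Conj r' r)"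

text \<open>Updated indices I(a,<v>) (as a relation; t is the constant-array term <v>).\<close>
inductive upd :: "pimap \<Rightarrow> trm \<Rightarrow> trm \<Rightarrow> trm set \<Rightarrow> bool" for \<pi> where
  self: "\<pi> (a, t) \<noteq> None \<Longrightarrow> a = t \<Longrightarrow> upd \<pi> a t {}"
| wr: "\<pi> (a, t) = Some (Tru, b) \<Longrightarrow> a \<noteq> t \<Longrightarrow> (b = Wr a j u \<or> a = Wr b j u) \<Longrightarrow> upd \<pi> b t S
       \<Longrightarrow> upd \<pi> a t (insert j S)"
| other: "\<pi> (a, t) = Some (r, c) \<Longrightarrow> a \<noteq> t
       \<Longrightarrow> \<not> (r = Tru \<and> (\<exists>j u. c = Wr a j u \<or> a = Wr c j u)) \<Longrightarrow> upd \<pi> c t S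
       \<Longrightarrow> upd \<pi> a t S"

inductive caext_step :: "'v config \<Rightarrow> 'v config \<Rightarrow> bool" where
  Interp: "wf_interp I' \<Longrightarrow> (\<forall>p\<in>A \<union> W A. models I' p)
     \<Longrightarrow> caext_step (Cfg A None \<pi>) (Cfg A (Some I') \<pi>)"
| Conf: "\<not> (\<exists>I'::'v interp. wf_interp I' \<and> (\<forall>p\<in>A \<union> W A. models I' p))
     \<Longrightarrow> caext_step (Cfg A Io \<pi>) Unsat"
| InitR: "Rd a i \<in> T A
     \<Longrightarrow> caext_step (Cfg A Io \<pi>) (Cfg A Io (\<pi>((a, Rd a i) := Some (Tru, a))))"
| InitW: "s = Wr a i u \<Longrightarrow> s \<in> T A
     \<Longrightarrow> caext_step (Cfg A Io \<pi>) (Cfg A Io (\<pi>((s, Rd s i) := Some (Tru, s))))"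
| RowD: "models I (Neg (Eq i j)) \<Longrightarrow> \<pi> (Wr a j u, Rd b i) \<noteq> None \<Longrightarrow> \<pi> (a, Rd b i) = None
     \<Longrightarrow> caext_step (Cfg A (Some I) \<pi>)
           (Cfg A (Some I) (\<pi>((a, Rd b i) := Some (Neg (Eq i j), Wr a j u))))"
| RowU: "models I (Neg (Eq i j)) \<Longrightarrow> Wr a j u \<in> T A \<Longrightarrow> \<pi> (a, Rd b i) \<noteq> None
     \<Longrightarrow> \<pi> (Wr a j u, Rd b i) = None
     \<Longrightarrow> caext_step (Cfg A (Some I) \<pi>)
           (Cfg A (Some I) (\<pi>((Wr a j u, Rd b i) := Some (Neg (Eq i j), a))))"
| EqR: "models I (Eq a c) \<Longrightarrow> a \<in> TA A \<Longrightarrow> c \<in> TA A \<Longrightarrow> (a, c) \<in> atoms A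
     \<Longrightarrow> \<pi> (a, Rd b i) \<noteq> None \<Longrightarrow> \<pi> (c, Rd b i) = None
     \<Longrightarrow> caext_step (Cfg A (Some I) \<pi>) (Cfg A (Some I) (\<pi>((c, Rd b i) := Some (Eq a c, a))))"
| EqL: "models I (Eq a c) \<Longrightarrow> a \<in> TA A \<Longrightarrow> c \<in> TA A \<Longrightarrow> (a, c) \<in> atoms A
     \<Longrightarrow> \<pi> (c, Rd b i) \<noteq> None \<Longrightarrow> \<pi> (a, Rd b i) = None
     \<Longrightarrow> caext_step (Cfg A (Some I) \<pi>) (Cfg A (Some I) (\<pi>((a, Rd b i) := Some (Eq a c, c))))"
| CongR: "models I (Eq i k) \<Longrightarrow> \<pi> (a, Rd b i) \<noteq> None \<Longrightarrow> \<pi> (a, Rd c k) \<noteq> None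
     \<Longrightarrow> models I (Neg (Eq (Rd b i) (Rd c k)))
     \<Longrightarrow> reason \<pi> a (Rd b i) r1 \<Longrightarrow> reason \<pi> a (Rd c k) r2
     \<Longrightarrow> caext_step (Cfg A (Some I) \<pi>)
           (Cfg (insert (Imp (Conj (Conj r1 r2) (Eq i k)) (Eq (Rd b i) (Rd c k))) A) None pi0)"
| DisEq: "models I (Neg (Eq a c)) \<Longrightarrow> a \<in> TA A \<Longrightarrow> c \<in> TA A \<Longrightarrow> (a, c) \<in> atoms A
     \<Longrightarrow> K {|a, c|} \<notin> T A
     \<Longrightarrow> caext_step (Cfg A (Some I) \<pi>)
           (Cfg (insert (Imp (Neg (Eq a c)) (Neg (Eq (Rd a (K {|a, c|})) (Rd c (K {|a, c|}))))) A)
                None pi0)"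
| Roc: "\<pi> (CA v, Rd b i) \<noteq> None \<Longrightarrow> models I (Neg (Eq (Rd b i) v))
     \<Longrightarrow> reason \<pi> (CA v) (Rd b i) r
     \<Longrightarrow> caext_step (Cfg A (Some I) \<pi>) (Cfg (insert (Imp r (Eq (Rd b i) v)) A) None pi0)"
| InitC: "CA v \<in> T A
     \<Longrightarrow> caext_step (Cfg A Io \<pi>) (Cfg A Io (\<pi>((CA v, CA v) := Some (Tru, CA v))))"
| CowD: "\<pi> (Wr a j u, CA v) \<noteq> None \<Longrightarrow> \<pi> (a, CA v) = None
     \<Longrightarrow> upd \<pi> (Wr a j u) (CA v) S \<Longrightarrow> set ks = insert j S \<Longrightarrow> models I (exdist ks)
     \<Longrightarrow> caext_step (Cfg A (Some I) \<pi>)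
           (Cfg A (Some I) (\<pi>((a, CA v) := Some (Tru, Wr a j u))))"
| CowU: "\<pi> (a, CA v) \<noteq> None \<Longrightarrow> \<pi> (Wr a j u, CA v) = None \<Longrightarrow> Wr a j u \<in> T A
     \<Longrightarrow> upd \<pi> a (CA v) S \<Longrightarrow> set ks = insert j S \<Longrightarrow> models I (exdist ks)
     \<Longrightarrow> caext_step (Cfg A (Some I) \<pi>)
           (Cfg A (Some I) (\<pi>((Wr a j u, CA v) := Some (Tru, a))))"
| CEqR: "models I (Eq a c) \<Longrightarrow> a \<in> TA A \<Longrightarrow> c \<in> TA A \<Longrightarrow> (a, c) \<in> atoms A
     \<Longrightarrow> \<pi> (a, CA v) \<noteq> None \<Longrightarrow> \<pi> (c, CA v) = None
     \<Longrightarrow> caext_step (Cfg A (Some I) \<pi>) (Cfg A (Some I) (\<pi>((c, CA v) := Some (Eq a c, a))))"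
| CEqL: "models I (Eq a c) \<Longrightarrow> a \<in> TA A \<Longrightarrow> c \<in> TA A \<Longrightarrow> (a, c) \<in> atoms A
     \<Longrightarrow> \<pi> (c, CA v) \<noteq> None \<Longrightarrow> \<pi> (a, CA v) = None
     \<Longrightarrow> caext_step (Cfg A (Some I) \<pi>) (Cfg A (Some I) (\<pi>((a, CA v) := Some (Eq a c, c))))"
| CongC: "\<pi> (a, CA v) \<noteq> None \<Longrightarrow> \<pi> (a, CA w) \<noteq> None \<Longrightarrow> models I (Neg (Eq v w))
     \<Longrightarrow> upd \<pi> a (CA v) S1 \<Longrightarrow> upd \<pi> a (CA w) S2 \<Longrightarrow> set ks = S1 \<union> S2
     \<Longrightarrow> models I (exdist ks)
     \<Longrightarrow> reason \<pi> a (CA v) r1 \<Longrightarrow> reason \<pi> a (CA w) r2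
     \<Longrightarrow> caext_step (Cfg A (Some I) \<pi>)
           (Cfg (insert (Imp (Conj (Conj r1 r2) (exdist ks)) (Eq v w)) A) None pi0)"

end

theory Submission
  imports Defs
begin

definition goodfm :: "fm \<Rightarrow> bool" where
  "goodfm p \<longleftrightarrow> (\<forall>(s,t)\<in>atoms_fm p. sort_of s \<noteq> None \<and> sort_of t \<noteq> None)"

definition invA :: "fm set \<Rightarrow> bool" where
  "invA A \<longleftrightarrow> (\<forall>p\<in>A. goodfm p)"

definition invS :: "pimap \<Rightarrow> bool" where
  "invS \<pi> \<longleftrightarrow> (\<forall>x t r c. \<pi> (x,t) = Some (r,c) \<longrightarrow> sort_of x = Some Arr \<and> sort_of c = Some Arr
     \<and> goodfm r \<and> ((\<exists>b i. t = Rd b i \<and> sort_of b = Some Arr \<and> sort_of i = Some Idx)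
                   \<or> (\<exists>v. t = CA v \<and> sort_of v = Some Elem)))"

definition shape :: "trm \<Rightarrow> trm \<Rightarrow> fm \<Rightarrow> trm \<Rightarrow> bool" where
  "shape x c r i \<longleftrightarrow> (\<exists>j u. r = Neg (Eq i j) \<and> (c = Wr x j u \<or> x = Wr c j u)) \<or> r = Eq x c \<or> r = Eq c x"

definition invR :: "pimap \<Rightarrow> bool" where
  "invR \<pi> \<longleftrightarrow> (\<forall>x b i r c. \<pi> (x, Rd b i) = Some (r,c) \<longrightarrow>
      x = b \<or> (\<pi> (c, Rd b i) \<noteq> None \<and> shape x c r i))"

definition invE :: "pimap \<Rightarrow> bool" where
  "invE \<pi> \<longleftrightarrow> (\<forall>x b i. \<pi> (x, Rd b i) \<noteq> None \<longrightarrow> (\<exists>r. reason \<pi> x (Rd b i) r))"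

definition inv :: "'v config \<Rightarrow> bool" where
  "inv C \<longleftrightarrow> (case C of Unsat \<Rightarrow> True | Cfg A Io \<pi> \<Rightarrow> invA A \<and> invS \<pi> \<and> invR \<pi> \<and> invE \<pi>)"

lemma goodfm_simps[simp]:
  "goodfm Tru" "goodfm Fls"
  "goodfm (Eq s t) \<longleftrightarrow> sort_of s \<noteq> None \<and> sort_of t \<noteq> None"
  "goodfm (Neg p) \<longleftrightarrow> goodfm p"
  "goodfm (Conj p q) \<longleftrightarrow> goodfm p \<and> goodfm q"
  "goodfm (Disj p q) \<longleftrightarrow> goodfm p \<and> goodfm q"
  "goodfm (Imp p q) \<longleftrightarrow> goodfm p \<and> goodfm q"
  "goodfm (Exi x st p) \<longleftrightarrow> goodfm p"
  "goodfm (All x st p) \<longleftrightarrow> goodfm p"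
  unfolding goodfm_def by (simp_all add: ball_Un case_prod_beta)

lemma wf_good: "wf_fm p \<Longrightarrow> goodfm p"
  by (induction p) (auto, metis option.distinct(1))

lemma sub_sort: "t \<in> subterms s \<Longrightarrow> sort_of s \<noteq> None \<Longrightarrow> sort_of t \<noteq> None"
  by (induction s) (auto split: if_splits)

lemma T_sort: "invA A \<Longrightarrow> t \<in> T A \<Longrightarrow> sort_of t \<noteq> None"
  unfolding T_def invA_def atoms_def goodfm_def
  by (fastforce dest: sub_sort)

lemma TA_sort: "t \<in> TA A \<Longrightarrow> sort_of t = Some Arr"
  unfolding TA_def by auto

lemma reason_good: "reason \<pi> x t r \<Longrightarrow> invS \<pi> \<Longrightarrow> goodfm r"
  by (induction rule: reason.induct) (auto simp: invS_def)

lemma upd_sort: "upd \<pi> a t S \<Longrightarrow> invS \<pi> \<Longrightarrow> \<forall>j\<in>S. sort_of j = Some Idx"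
proof (induction rule: upd.induct)
  case (wr a t b j u S)
  then have "sort_of a = Some Arr" "sort_of b = Some Arr" unfolding invS_def by blast+
  then show ?case using wr by (auto split: if_splits)
qed auto

lemma conjs_atoms: "atoms_fm (conjs ps) \<subseteq> (\<Union>p\<in>set ps. atoms_fm p)"
  by (induction ps rule: conjs.induct) auto

lemma exdist_good: "\<forall>k\<in>set ks. sort_of k \<noteq> None \<Longrightarrow> goodfm (exdist ks)"
  using conjs_atoms[of "map (\<lambda>k. Neg (Eq (Var ''i'' Idx) k)) ks"]
  unfolding exdist_def goodfm_def by fastforce

lemma reason_mono:
  "reason \<pi> a t r \<Longrightarrow> (\<forall>k. \<pi> k \<noteq> None \<longrightarrow> \<pi>' k \<noteq> None)
   \<Longrightarrow> (\<forall>a' t' v. \<pi> (a',t') = Some v \<longrightarrow> \<not> (t' = a' \<or> (\<exists>i. t' = Rd a' i)) \<longrightarrow> \<pi>' (a',t') = Some v)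
   \<Longrightarrow> reason \<pi>' a t r"
proof (induction rule: reason.induct)
  case (base a t)
  then show ?case by (intro reason.base) auto
next
  case (step a t r c r')
  then show ?case by (intro reason.step[of _ _ _ r c]) auto
qed

lemma eval_dom: "wf_interp I \<Longrightarrow> wf_assign I \<rho> \<Longrightarrow> sort_of t = Some s \<Longrightarrow> eval I \<rho> t \<in> idom I s"
  by (induction t arbitrary: s) (auto simp: wf_interp_def wf_assign_def split: if_splits)

lemma valid_step:
  fixes I :: "'w interp"
  assumes M: "arr_model I" and RA: "wf_assign I \<rho>"
    and sa: "sort_of a = Some Arr" and sc: "sort_of c = Some Arr" and si: "sort_of i = Some Idx"
    and sh: "shape a c r0 i" and sr: "sat I \<rho> r0"
  shows "ird I (eval I \<rho> a) (eval I \<rho> i) = ird I (eval I \<rho> c) (eval I \<rho> i)"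
proof -
  have W: "wf_interp I" using M unfolding arr_model_def by blast
  have rowne: "\<And>a i j u. a\<in>idom I Arr \<Longrightarrow> i\<in>idom I Idx \<Longrightarrow> j\<in>idom I Idx \<Longrightarrow> u\<in>idom I Elem \<Longrightarrow>
        i \<noteq> j \<Longrightarrow> ird I (iwr I a i u) j = ird I a j"
    using M unfolding arr_model_def by blast
  have ei: "eval I \<rho> i \<in> idom I Idx" using eval_dom[OF W RA si] .
  from sh show ?thesis unfolding shape_def
  proof (elim disjE exE conjE)
    fix j u assume r0: "r0 = Neg (Eq i j)" and cw: "c = Wr a j u"
    from sc cw have "sort_of a = Some Arr" "sort_of j = Some Idx" "sort_of u = Some Elem"
      by (auto split: if_splits)
    then show ?thesis using r0 cw sr ei rowne eval_dom[OF W RA] by auto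
  next
    fix j u assume r0: "r0 = Neg (Eq i j)" and cw: "a = Wr c j u"
    from sa cw have "sort_of c = Some Arr" "sort_of j = Some Idx" "sort_of u = Some Elem"
      by (auto split: if_splits)
    then show ?thesis using r0 cw sr ei rowne eval_dom[OF W RA] by auto
  next
    assume "r0 = Eq a c" then show ?thesis using sr by auto
  next
    assume "r0 = Eq c a" then show ?thesis using sr by auto
  qed
qed

lemma valid_reason:
  assumes S: "invS \<pi>" and R: "invR \<pi>"
  shows "reason \<pi> x t r \<Longrightarrow> t = Rd b i \<Longrightarrow> tvalid TYPE('w) (Imp r (Eq (Rd x i) (Rd b i)))"
proof (induction rule: reason.induct)
  case (base a t)
  then obtain rc where rc: "\<pi> (a, t) = Some rc" by auto
  then have "sort_of a = Some Arr" using S unfolding invS_def by (cases rc) blast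
  moreover have "sort_of (Rd b i) \<noteq> Some Arr" by auto
  ultimately have "a = b" using base by auto
  then show ?case unfolding tvalid_def by simp
next
  case (step a t r0 c r')
  have IH: "tvalid TYPE('w) (Imp r' (Eq (Rd c i) (Rd b i)))" using step by blast
  have sa: "sort_of a = Some Arr" and sc: "sort_of c = Some Arr" and si: "sort_of i = Some Idx"
    using S step.hyps(1) step.prems unfolding invS_def by blast+
  have "a \<noteq> b" using step by auto
  then have sh: "shape a c r0 i" using R step.hyps(1) step.prems unfolding invR_def by blast
  show ?case unfolding tvalid_def
  proof (intro allI impI)
    fix I :: "'w interp" and \<rho> assume H: "arr_model I \<and> wf_assign I \<rho>"
    show "sat I \<rho> (Imp (Conj r' r0) (Eq (Rd a i) (Rd b i)))"
    proof (cases "sat I \<rho> r' \<and> sat I \<rho> r0")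
      case False then show ?thesis by auto
    next
      case True
      then have s1: "sat I \<rho> r'" and s2: "sat I \<rho> r0" by auto
      have "ird I (eval I \<rho> c) (eval I \<rho> i) = ird I (eval I \<rho> b) (eval I \<rho> i)"
        using IH H s1 unfolding tvalid_def by fastforce
      moreover have "ird I (eval I \<rho> a) (eval I \<rho> i) = ird I (eval I \<rho> c) (eval I \<rho> i)"
        using valid_step[OF _ _ sa sc si sh s2] H by blast
      ultimately show ?thesis by simp
    qed
  qed
qed

lemma add_entry:
  assumes S: "invS \<pi>" and R: "invR \<pi>" and E: "invE \<pi>"
    and sx: "sort_of x = Some Arr" and sc: "sort_of c = Some Arr" and gr: "goodfm r"
    and st: "(\<exists>b i. t = Rd b i \<and> sort_of b = Some Arr \<and> sort_of i = Some Idx)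
                   \<or> (\<exists>v. t = CA v \<and> sort_of v = Some Elem)"
    and rr: "\<forall>b i. t = Rd b i \<longrightarrow> x = b \<or> (\<pi> (c, Rd b i) \<noteq> None \<and> shape x c r i)"
    and ov: "\<pi> (x,t) = None \<or> t = x \<or> (\<exists>i. t = Rd x i)"
  shows "invS (\<pi>((x,t) := Some (r,c))) \<and> invR (\<pi>((x,t) := Some (r,c))) \<and> invE (\<pi>((x,t) := Some (r,c)))"
proof (intro conjI)
  let ?p = "\<pi>((x,t) := Some (r,c))"
  show "invS ?p" using S sx sc gr st unfolding invS_def by auto
  show "invR ?p" unfolding invR_def
  proof (intro allI impI)
    fix x' b i r' c' assume h: "?p (x', Rd b i) = Some (r', c')"
    show "x' = b \<or> (?p (c', Rd b i) \<noteq> None \<and> shape x' c' r' i)"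
    proof (cases "(x', Rd b i) = (x, t)")
      case True then show ?thesis using h rr by auto
    next
      case False
      then have "\<pi> (x', Rd b i) = Some (r', c')" using h by auto
      then have "x' = b \<or> (\<pi> (c', Rd b i) \<noteq> None \<and> shape x' c' r' i)"
        using R unfolding invR_def by blast
      then show ?thesis by auto
    qed
  qed
  have mono: "\<And>a t' r'. reason \<pi> a t' r' \<Longrightarrow> reason ?p a t' r'"
    by (erule reason_mono) (use ov in auto)
  show "invE ?p" unfolding invE_def
  proof (intro allI impI)
    fix x' b i assume d: "?p (x', Rd b i) \<noteq> None"
    show "\<exists>r. reason ?p x' (Rd b i) r"
    proof (cases "(x', Rd b i) = (x, t)")
      case True
      then have tx: "t = Rd b i" "x' = x" by auto
      show ?thesis
      proof (cases "x = b")
        case True then show ?thesis using tx by (intro exI[of _ Tru] reason.base) auto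
      next
        case False
        then have "\<pi> (c, Rd b i) \<noteq> None" using rr tx by auto
        then obtain r' where "reason \<pi> c (Rd b i) r'" using E unfolding invE_def by blast
        then have "reason ?p c (Rd b i) r'" by (rule mono)
        then show ?thesis using tx False sx by (intro exI[of _ "Conj r' r"] reason.step[of _ _ _ r c]) (auto split: if_splits)
      qed
    next
      case False
      then have "\<pi> (x', Rd b i) \<noteq> None" using d by auto
      then obtain r' where "reason \<pi> x' (Rd b i) r'" using E unfolding invE_def by blast
      then show ?thesis using mono by blast
    qed
  qed
qed

lemma pi0_invs[simp]: "invS pi0" "invR pi0" "invE pi0"
  unfolding invS_def invR_def invE_def pi0_def by auto

lemma inv_reset: "invA A \<Longrightarrow> goodfm p \<Longrightarrow> inv (Cfg (insert p A) Io pi0)"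
  unfolding inv_def invA_def invS_def invR_def invE_def pi0_def by auto

lemma invS_Rd: "invS \<pi> \<Longrightarrow> \<pi> (x, Rd b i) \<noteq> None \<Longrightarrow>
   sort_of x = Some Arr \<and> sort_of b = Some Arr \<and> sort_of i = Some Idx"
  unfolding invS_def by fastforce

lemma invS_CA: "invS \<pi> \<Longrightarrow> \<pi> (x, CA v) \<noteq> None \<Longrightarrow>
   sort_of x = Some Arr \<and> sort_of v = Some Elem"
  unfolding invS_def by fastforce

lemma inv_cfg: "inv (Cfg A Io \<pi>) \<Longrightarrow> invA A \<and> invS \<pi> \<and> invR \<pi> \<and> invE \<pi>"
  unfolding inv_def by simp

lemma step_inv: "caext_step C C' \<Longrightarrow> inv C \<Longrightarrow> inv C'"
proof (induction rule: caext_step.induct)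
  case (Interp I' A \<pi>) then show ?case by (simp add: inv_def)
next
  case (Conf A Io \<pi>) then show ?case by (simp add: inv_def)
next
  case (InitR a i A Io \<pi>)
  then have "invA A" by (simp add: inv_def)
  have "sort_of (Rd a i) \<noteq> None" by (rule T_sort[OF \<open>invA A\<close> InitR.hyps])
  then have "sort_of a = Some Arr" "sort_of i = Some Idx" by (auto split: if_splits)
  then show ?case using InitR add_entry[of \<pi> a a Tru "Rd a i"] unfolding inv_def by auto
next
  case (InitW s a i u A Io \<pi>)
  then have "invA A" by (simp add: inv_def)
  have "sort_of (Wr a i u) \<noteq> None" by (rule T_sort[OF \<open>invA A\<close>]) (use InitW.hyps in simp)
  then have "sort_of s = Some Arr" "sort_of i = Some Idx" using InitW by (auto split: if_splits)
  then show ?case using InitW add_entry[of \<pi> s s Tru "Rd s i"] unfolding inv_def by auto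
next
  case (RowD I i j \<pi> a u b A)
  then obtain rc where rc: "\<pi> (Wr a j u, Rd b i) = Some rc" by auto
  have "sort_of (Wr a j u) = Some Arr" "sort_of b = Some Arr" "sort_of i = Some Idx"
    using RowD invS_Rd[of \<pi> "Wr a j u" b i] inv_cfg by blast+
  then have "sort_of a = Some Arr" "sort_of j = Some Idx" by (auto split: if_splits)
  then show ?case using RowD \<open>sort_of (Wr a j u) = Some Arr\<close> \<open>sort_of b = Some Arr\<close> \<open>sort_of i = Some Idx\<close>
      add_entry[of \<pi> a "Wr a j u" "Neg (Eq i j)" "Rd b i"] unfolding inv_def shape_def by auto
next
  case (RowU I i j a u A \<pi> b)
  then obtain rc where rc: "\<pi> (a, Rd b i) = Some rc" by auto
  then have "sort_of b = Some Arr" "sort_of i = Some Idx"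
    using RowU invS_Rd[of \<pi> a b i] inv_cfg by blast+
  have "invA A" using RowU by (simp add: inv_def)
  have "sort_of (Wr a j u) \<noteq> None" by (rule T_sort[OF \<open>invA A\<close> RowU.hyps(2)])
  then have "sort_of a = Some Arr" "sort_of j = Some Idx" "sort_of (Wr a j u) = Some Arr"
    by (auto split: if_splits)
  then show ?case using RowU \<open>sort_of b = Some Arr\<close> \<open>sort_of i = Some Idx\<close>
      add_entry[of \<pi> "Wr a j u" a "Neg (Eq i j)" "Rd b i"] unfolding inv_def shape_def by auto
next
  case (EqR I a c A \<pi> b i)
  then obtain rc where rc: "\<pi> (a, Rd b i) = Some rc" by auto
  then have "sort_of b = Some Arr" "sort_of i = Some Idx"
    using EqR invS_Rd[of \<pi> a b i] inv_cfg by blast+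
  then show ?case using EqR TA_sort[of a A] TA_sort[of c A]
      add_entry[of \<pi> c a "Eq a c" "Rd b i"] unfolding inv_def shape_def by auto
next
  case (EqL I a c A \<pi> b i)
  then obtain rc where rc: "\<pi> (c, Rd b i) = Some rc" by auto
  then have "sort_of b = Some Arr" "sort_of i = Some Idx"
    using EqL invS_Rd[of \<pi> c b i] inv_cfg by blast+
  then show ?case using EqL TA_sort[of a A] TA_sort[of c A]
      add_entry[of \<pi> a c "Eq a c" "Rd b i"] unfolding inv_def shape_def by auto
next
  case (CongR I i k \<pi> a b c r1 r2 A)
  obtain rc1 where rc1: "\<pi> (a, Rd b i) = Some rc1" using CongR by auto
  obtain rc2 where rc2: "\<pi> (a, Rd c k) = Some rc2" using CongR by auto
  have s1: "sort_of b = Some Arr" "sort_of i = Some Idx"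
    using CongR invS_Rd[of \<pi> a b i] inv_cfg by blast+
  have s2: "sort_of c = Some Arr" "sort_of k = Some Idx"
    using CongR invS_Rd[of \<pi> a c k] inv_cfg by blast+
  have "goodfm r1" "goodfm r2" using CongR reason_good unfolding inv_def by auto
  then show ?case using CongR s1 s2 inv_reset unfolding inv_def by auto
next
  case (DisEq I a c A \<pi>)
  then show ?case using TA_sort[of a A] TA_sort[of c A] inv_reset unfolding inv_def by auto
next
  case (Roc \<pi> v b i I r A)
  obtain rc where rc: "\<pi> (CA v, Rd b i) = Some rc" using Roc by auto
  have s1: "sort_of b = Some Arr" "sort_of i = Some Idx" "sort_of (CA v) = Some Arr"
    using Roc invS_Rd[of \<pi> "CA v" b i] inv_cfg by blast+
  have "goodfm r" using Roc reason_good unfolding inv_def by auto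
  then show ?case using Roc s1 inv_reset unfolding inv_def by (auto split: if_splits)
next
  case (InitC v A Io \<pi>)
  then have "invA A" by (simp add: inv_def)
  have "sort_of (CA v) \<noteq> None" by (rule T_sort[OF \<open>invA A\<close> InitC.hyps])
  then have "sort_of v = Some Elem" "sort_of (CA v) = Some Arr" by (auto split: if_splits)
  then show ?case using InitC add_entry[of \<pi> "CA v" "CA v" Tru "CA v"] unfolding inv_def by auto
next
  case (CowD \<pi> a j u v S ks I A)
  obtain rc where rc: "\<pi> (Wr a j u, CA v) = Some rc" using CowD by auto
  have s1: "sort_of (Wr a j u) = Some Arr" "sort_of v = Some Elem"
    using CowD invS_CA[of \<pi> "Wr a j u" v] inv_cfg by blast+
  then have "sort_of a = Some Arr" by (auto split: if_splits)
  then show ?case using CowD s1 add_entry[of \<pi> a "Wr a j u" Tru "CA v"] unfolding inv_def by auto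
next
  case (CowU \<pi> a v j u A S ks I)
  obtain rc where rc: "\<pi> (a, CA v) = Some rc" using CowU by auto
  have s1: "sort_of a = Some Arr" "sort_of v = Some Elem"
    using CowU invS_CA[of \<pi> a v] inv_cfg by blast+
  have "invA A" using CowU by (simp add: inv_def)
  have "sort_of (Wr a j u) \<noteq> None" by (rule T_sort[OF \<open>invA A\<close> CowU.hyps(3)])
  then have "sort_of (Wr a j u) = Some Arr" by (auto split: if_splits)
  then show ?case using CowU s1 add_entry[of \<pi> "Wr a j u" a Tru "CA v"] unfolding inv_def by auto
next
  case (CEqR I a c A \<pi> v)
  obtain rc where rc: "\<pi> (a, CA v) = Some rc" using CEqR by auto
  have s1: "sort_of v = Some Elem"
    using CEqR invS_CA[of \<pi> a v] inv_cfg by blast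
  then show ?case using CEqR TA_sort[of a A] TA_sort[of c A]
      add_entry[of \<pi> c a "Eq a c" "CA v"] unfolding inv_def by auto
next
  case (CEqL I a c A \<pi> v)
  obtain rc where rc: "\<pi> (c, CA v) = Some rc" using CEqL by auto
  have s1: "sort_of v = Some Elem"
    using CEqL invS_CA[of \<pi> c v] inv_cfg by blast
  then show ?case using CEqL TA_sort[of a A] TA_sort[of c A]
      add_entry[of \<pi> a c "Eq a c" "CA v"] unfolding inv_def by auto
next
  case (CongC \<pi> a v w I S1 S2 ks r1 r2 A)
  obtain rc1 where rc1: "\<pi> (a, CA v) = Some rc1" using CongC by auto
  obtain rc2 where rc2: "\<pi> (a, CA w) = Some rc2" using CongC by auto
  have s1: "sort_of v = Some Elem"
    using CongC invS_CA[of \<pi> a v] inv_cfg by blast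
  have s2: "sort_of w = Some Elem"
    using CongC invS_CA[of \<pi> a w] inv_cfg by blast
  have "goodfm r1" "goodfm r2" using CongC reason_good unfolding inv_def by auto
  moreover have "\<forall>k\<in>set ks. sort_of k \<noteq> None"
    using CongC upd_sort[of \<pi> a "CA v" S1] upd_sort[of \<pi> a "CA w" S2] unfolding inv_def by auto
  then have "goodfm (exdist ks)" by (rule exdist_good)
  ultimately show ?case using CongC s1 s2 inv_reset unfolding inv_def by auto
qed

theorem mainTheorem4:
  fixes A0 :: "fm set" and C :: "'v config"
  assumes "input_ok A0"
    and "caext_step\<^sup>*\<^sup>* (init A0) C"
    and "C \<noteq> Unsat"
  shows "\<forall>A Io \<pi>. C = Cfg A Io \<pi> \<longrightarrow>
     (\<forall>a b i. sort_of a = Some Arr \<and> sort_of b = Some Arr \<and> sort_of i = Some Idx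
        \<and> \<pi> (a, Rd b i) \<noteq> None \<longrightarrow>
          (\<exists>r. reason \<pi> a (Rd b i) r) \<and>
          (\<forall>r. reason \<pi> a (Rd b i) r \<longrightarrow>
             tvalid TYPE('w) (Imp r (Eq (Rd a i) (Rd b i)))))"
proof -
  have "inv (init A0 :: 'v config)"
    using assms(1) wf_good unfolding inv_def init_def invA_def input_ok_def invS_def invR_def invE_def pi0_def
    by auto
  with assms(2) have "inv C"
    by (induction rule: rtranclp_induct) (auto intro: step_inv)
  then show ?thesis using valid_reason[where 'w='w] unfolding inv_def invE_def
    by (auto split: config.splits)
qed

end
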